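(* Let $V\subseteq\mathbb{R}^n$ be convex, $F\colon V\to\mathbb{R}^n$ globally Lipschitz, and $\tilde F\colon V^N\to\mathbb{R}^{nN}$, $\tilde F(u)=(F(u_1)^T,\dots,F(u_N)^T)^T$. For $1\le p\le\infty$ and a positive diagonal $Q$, $M^+_{p,Q}[\tilde F]\le M_{p,Q}[F]$.
   Context: On $\mathbb{R}^{nN}$, $\|u\|_{p,Q}=\big\|(\|Qu_1\|_p,\dots,\|Qu_N\|_p)^T\big\|_p$ and $M^+_{p,Q}[\tilde F]=\sup_{u\neq v\in V^N}\lim_{h\to0^+}\frac1h\left(\frac{\|u-v+h(\tilde F(u)-\tilde F(v))\|_{p,Q}}{\|u-v\|_{p,Q}}-1\right)$. On $\mathbb{R}^n$, $\|x\|_{p,Q}=\|Qx\|_p$ and $M_{p,Q}[F]=\lim_{h\to0^+}\sup_{x\neq y\in V}\frac1h\left(\frac{\|x-y+h(F(x)-F(y))\|_{p,Q}}{\|x-y\|_{p,Q}}-1\right)$. *)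

theory Defs
  imports "HOL-Analysis.Analysis"
begin

definition pnorm :: "ereal \<Rightarrow> real^'n \<Rightarrow> real" where
  "pnorm p x = (if p = \<infinity> then Max (range (\<lambda>i. \<bar>x $ i\<bar>))
               else (\<Sum>i\<in>UNIV. \<bar>x $ i\<bar> powr real_of_ereal p) powr (1 / real_of_ereal p))"

definition pQnorm :: "ereal \<Rightarrow> real^'n^'n \<Rightarrow> real^'n \<Rightarrow> real" where
  "pQnorm p Q x = pnorm p (Q *v x)"

definition pQnorm_blk :: "ereal \<Rightarrow> real^'n^'n \<Rightarrow> (real^'n)^'N \<Rightarrow> real" where
  "pQnorm_blk p Q u = pnorm p (\<chi> k. pQnorm p Q (u $ k))"

definition pos_diag :: "real^'n^'n \<Rightarrow> bool" where
  "pos_diag Q \<longleftrightarrow> (\<forall>i j. i \<noteq> j \<longrightarrow> Q $ i $ j = 0) \<and> (\<forall>i. Q $ i $ i > 0)"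

definition Ftilde :: "(real^'n \<Rightarrow> real^'n) \<Rightarrow> (real^'n)^'N \<Rightarrow> (real^'n)^'N" where
  "Ftilde F u = (\<chi> k. F (u $ k))"

text \<open>M_{p,Q}[F] = lim_{h->0+} sup_{x ~= y in V} (1/h)(||x-y+h(F x - F y)||/||x-y|| - 1),
  valued in ereal (sup over the empty set is -\<infinity>).\<close>
definition logmu :: "ereal \<Rightarrow> real^'n^'n \<Rightarrow> (real^'n) set \<Rightarrow> (real^'n \<Rightarrow> real^'n) \<Rightarrow> ereal" where
  "logmu p Q V F = Lim (at_right (0::real))
     (\<lambda>h. SUP xy \<in> {(x, y). x \<in> V \<and> y \<in> V \<and> x \<noteq> y}.
        ereal ((1 / h) * (pQnorm p Q (fst xy - snd xy + h *\<^sub>R (F (fst xy) - F (snd xy)))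
                          / pQnorm p Q (fst xy - snd xy) - 1)))"

definition logmu_plus_blk :: "ereal \<Rightarrow> real^'n^'n \<Rightarrow> (real^'n) set
     \<Rightarrow> ((real^'n)^'N \<Rightarrow> (real^'n)^'N) \<Rightarrow> ereal" where
  "logmu_plus_blk p Q V G = (SUP uv \<in> {(u, v). (\<forall>k. u $ k \<in> V) \<and> (\<forall>k. v $ k \<in> V) \<and> u \<noteq> v}.
     ereal (Lim (at_right (0::real))
       (\<lambda>h. (1 / h) * (pQnorm_blk p Q (fst uv - snd uv + h *\<^sub>R (G (fst uv) - G (snd uv)))
                         / pQnorm_blk p Q (fst uv - snd uv) - 1))))"

end

theory Submission
  imports Defs
begin

lemma powr_convex0:
  fixes P t x y :: real
  assumes P: "1 \<le> P" and t: "0 \<le> t" "t \<le> 1" and x: "0 \<le> x" and y: "0 \<le> y"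
  shows "((1-t)*x + t*y) powr P \<le> (1-t) * x powr P + t * y powr P"
proof -
  have key: "(s*z) powr P \<le> s * z powr P" if "0\<le>s" "s\<le>1" "0\<le>z" for s z :: real
  proof -
    have "s powr P \<le> s" using that P
      by (cases "s = 0") (auto intro: powr_le_one_le)
    have "(s*z) powr P = s powr P * z powr P" using that by (simp add: powr_mult)
    also have "\<dots> \<le> s * z powr P" using \<open>s powr P \<le> s\<close> by (rule mult_right_mono) simp
    finally show ?thesis .
  qed
  show ?thesis
  proof (cases "x = 0 \<or> y = 0")
    case True
    then show ?thesis
    proof
      assume "x = 0" then show ?thesis using key[of t y] t y P by simp
    next
      assume "y = 0" then show ?thesis using key[of "1-t" x] t x P by simp
    qed
  next
    case False
    then have "x > 0" "y > 0" using x y by auto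
    then show ?thesis using convex_onD[OF powr_convex[OF P], of t x y] t by simp
  qed
qed

lemma abs_powr_convex:
  fixes P t a b :: real
  assumes P: "1 \<le> P" and t: "0 \<le> t" "t \<le> 1"
  shows "\<bar>(1-t)*a + t*b\<bar> powr P \<le> (1-t) * \<bar>a\<bar> powr P + t * \<bar>b\<bar> powr P"
proof -
  have "\<bar>(1-t)*a + t*b\<bar> \<le> (1-t)*\<bar>a\<bar> + t*\<bar>b\<bar>" using t
  proof -
    have "\<bar>(1-t)*a + t*b\<bar> \<le> \<bar>(1-t)*a\<bar> + \<bar>t*b\<bar>" by (rule abs_triangle_ineq)
    also have "\<dots> = (1-t)*\<bar>a\<bar> + t*\<bar>b\<bar>" using t by (simp add: abs_mult)
    finally show ?thesis .
  qed
  then have "\<bar>(1-t)*a + t*b\<bar> powr P \<le> ((1-t)*\<bar>a\<bar> + t*\<bar>b\<bar>) powr P"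
    using P by (intro powr_mono2) auto
  also have "\<dots> \<le> (1-t) * \<bar>a\<bar> powr P + t * \<bar>b\<bar> powr P"
    using powr_convex0[OF P t] by simp
  finally show ?thesis .
qed

definition qn :: "real \<Rightarrow> real^'n \<Rightarrow> real" where
  "qn P x = (\<Sum>i\<in>UNIV. \<bar>x $ i\<bar> powr P) powr (1 / P)"

lemma qn_nonneg: "0 \<le> qn P x" by (simp add: qn_def)

lemma qn_scale:
  assumes P: "1 \<le> P"
  shows "qn P (c *\<^sub>R x) = \<bar>c\<bar> * qn P x"
proof -
  have "(\<Sum>i\<in>UNIV. \<bar>(c *\<^sub>R x) $ i\<bar> powr P) = \<bar>c\<bar> powr P * (\<Sum>i\<in>UNIV. \<bar>x $ i\<bar> powr P)"
    by (simp add: abs_mult powr_mult sum_distrib_left)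
  then have "qn P (c *\<^sub>R x) = (\<bar>c\<bar> powr P) powr (1/P) * qn P x"
    by (simp add: qn_def powr_mult sum_nonneg)
  also have "(\<bar>c\<bar> powr P) powr (1/P) = \<bar>c\<bar>" using P by (simp add: powr_powr)
  finally show ?thesis .
qed

lemma qn_pow:
  assumes P: "1 \<le> P"
  shows "qn P x powr P = (\<Sum>i\<in>UNIV. \<bar>x $ i\<bar> powr P)"
  using P by (simp add: qn_def powr_powr sum_nonneg)

lemma qn_zero:
  assumes P: "1 \<le> P" and z: "qn P x = 0"
  shows "x = 0"
proof -
  have "(\<Sum>i\<in>UNIV. \<bar>x $ i\<bar> powr P) = 0" using qn_pow[OF P, of x] z P by simp
  then have "\<forall>i\<in>UNIV. \<bar>x $ i\<bar> powr P = 0" by (subst sum_nonneg_eq_0_iff[symmetric]) auto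
  then show ?thesis by (simp add: vec_eq_iff)
qed

lemma qn_convex:
  assumes P: "1 \<le> P" and t: "0 \<le> t" "t \<le> 1"
  shows "qn P ((1-t) *\<^sub>R x + t *\<^sub>R y) powr P \<le> (1-t) * qn P x powr P + t * qn P y powr P"
proof -
  have "(\<Sum>i\<in>UNIV. \<bar>((1-t) *\<^sub>R x + t *\<^sub>R y) $ i\<bar> powr P)
     \<le> (\<Sum>i\<in>UNIV. (1-t) * \<bar>x $ i\<bar> powr P + t * \<bar>y $ i\<bar> powr P)"
    by (intro sum_mono) (simp add: abs_powr_convex[OF P t])
  then show ?thesis by (simp add: qn_pow[OF P] sum.distrib sum_distrib_left)
qed

lemma qn_triangle:
  assumes P: "1 \<le> P"
  shows "qn P (x + y) \<le> qn P x + qn P y"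
proof (cases "qn P x = 0 \<or> qn P y = 0")
  case True
  then show ?thesis
  proof
    assume "qn P x = 0" then have "x = 0" by (rule qn_zero[OF P])
    then show ?thesis by (simp add: qn_nonneg)
  next
    assume "qn P y = 0" then have "y = 0" by (rule qn_zero[OF P])
    then show ?thesis by (simp add: qn_nonneg)
  qed
next
  case False
  define a where "a = qn P x"
  define b where "b = qn P y"
  have a: "a > 0" and b: "b > 0" using False qn_nonneg a_def b_def
    by (metis less_eq_real_def)+
  define t where "t = b / (a+b)"
  have t: "0 \<le> t" "t \<le> 1" using a b by (auto simp: t_def)
  have 1: "1 - t = a/(a+b)" using a b by (simp add: t_def field_simps)
  have xa: "qn P ((1/a) *\<^sub>R x) = 1" using a by (simp add: qn_scale[OF P] a_def)
  have yb: "qn P ((1/b) *\<^sub>R y) = 1" using b by (simp add: qn_scale[OF P] b_def)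
  have c1: "(1-t) * (1/a) = 1/(a+b)" using a b by (simp add: 1)
  have c2: "t * (1/b) = 1/(a+b)" using a b by (simp add: t_def)
  have eq: "(1-t) *\<^sub>R ((1/a) *\<^sub>R x) + t *\<^sub>R ((1/b) *\<^sub>R y) = (1/(a+b)) *\<^sub>R (x + y)"
    by (simp only: scaleR_scaleR c1 c2 scaleR_add_right)
  have "qn P ((1/(a+b)) *\<^sub>R (x + y)) powr P \<le> (1-t) * qn P ((1/a) *\<^sub>R x) powr P + t * qn P ((1/b) *\<^sub>R y) powr P"
    using qn_convex[OF P t, of "(1/a) *\<^sub>R x" "(1/b) *\<^sub>R y"] unfolding eq .
  then have "qn P ((1/(a+b)) *\<^sub>R (x + y)) powr P \<le> 1" by (simp add: xa yb)
  have "qn P ((1/(a+b)) *\<^sub>R (x + y)) \<le> 1"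
  proof (rule ccontr)
    assume "\<not> qn P ((1/(a+b)) *\<^sub>R (x + y)) \<le> 1"
    then have "1 powr P < qn P ((1/(a+b)) *\<^sub>R (x + y)) powr P"
      using P by (intro powr_less_mono2) auto
    then show False using \<open>qn P ((1/(a+b)) *\<^sub>R (x + y)) powr P \<le> 1\<close> by simp
  qed
  then have "qn P (x+y) / (a+b) \<le> 1" using a b by (simp add: qn_scale[OF P])
  then show ?thesis using a b by (simp add: a_def b_def)
qed

lemma qn_mono:
  assumes P: "1 \<le> P" and le: "\<And>i. \<bar>x $ i\<bar> \<le> \<bar>y $ i\<bar>"
  shows "qn P x \<le> qn P y"
  unfolding qn_def using P le
  by (intro powr_mono2 sum_mono sum_nonneg) auto

lemma pnorm_fin:
  assumes "1 \<le> p" "p \<noteq> \<infinity>"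
  shows "pnorm p x = qn (real_of_ereal p) x" "1 \<le> real_of_ereal p"
  using assms by (cases p; simp add: pnorm_def qn_def)+

lemma pnorm_inf: "pnorm \<infinity> x = Max (range (\<lambda>i. \<bar>x $ i\<bar>))"
  by (simp add: pnorm_def)

lemma pnorm_nonneg:
  assumes "1 \<le> p" shows "0 \<le> pnorm p x"
proof (cases "p = \<infinity>")
  case True
  have "0 \<le> \<bar>x $ i\<bar>" for i by simp
  then show ?thesis using True by (simp add: pnorm_inf Max_ge_iff)
next
  case False
  then show ?thesis using pnorm_fin[OF assms] qn_nonneg by metis
qed

lemma pnorm_scale:
  assumes "1 \<le> p" shows "pnorm p (c *\<^sub>R x) = \<bar>c\<bar> * pnorm p x"
proof (cases "p = \<infinity>")
  case True
  have "Max (range (\<lambda>i. \<bar>x $ i\<bar>)) \<in> range (\<lambda>i. \<bar>x $ i\<bar>)" by (rule Max_in) auto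
  then obtain j where j: "Max (range (\<lambda>i. \<bar>x $ i\<bar>)) = \<bar>x $ j\<bar>" by (metis imageE)
  have "Max (range (\<lambda>i. \<bar>(c *\<^sub>R x) $ i\<bar>)) = \<bar>c\<bar> * Max (range (\<lambda>i. \<bar>x $ i\<bar>))"
  proof (rule antisym)
    show "Max (range (\<lambda>i. \<bar>(c *\<^sub>R x) $ i\<bar>)) \<le> \<bar>c\<bar> * Max (range (\<lambda>i. \<bar>x $ i\<bar>))"
      by (auto simp: Max_le_iff abs_mult intro!: mult_left_mono)
    show "\<bar>c\<bar> * Max (range (\<lambda>i. \<bar>x $ i\<bar>)) \<le> Max (range (\<lambda>i. \<bar>(c *\<^sub>R x) $ i\<bar>))"
      unfolding j by (rule Max_ge) (auto simp: abs_mult)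
  qed
  then show ?thesis using True by (simp add: pnorm_inf)
next
  case False
  then show ?thesis using pnorm_fin[OF assms] qn_scale by metis
qed

lemma pnorm_triangle:
  assumes "1 \<le> p" shows "pnorm p (x + y) \<le> pnorm p x + pnorm p y"
proof (cases "p = \<infinity>")
  case True
  have "\<bar>(x+y) $ i\<bar> \<le> Max (range (\<lambda>i. \<bar>x $ i\<bar>)) + Max (range (\<lambda>i. \<bar>y $ i\<bar>))" for i
  proof -
    have "\<bar>(x+y) $ i\<bar> \<le> \<bar>x $ i\<bar> + \<bar>y $ i\<bar>" by (simp add: abs_triangle_ineq)
    also have "\<dots> \<le> Max (range (\<lambda>i. \<bar>x $ i\<bar>)) + Max (range (\<lambda>i. \<bar>y $ i\<bar>))"
      by (intro add_mono Max_ge) auto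
    finally show ?thesis .
  qed
  then show ?thesis using True by (simp add: pnorm_inf Max_le_iff)
next
  case False
  then show ?thesis using pnorm_fin[OF assms] qn_triangle by metis
qed

lemma pnorm_zero:
  assumes "1 \<le> p" "pnorm p x = 0" shows "x = 0"
proof (cases "p = \<infinity>")
  case True
  have "\<bar>x $ i\<bar> \<le> 0" for i
  proof -
    have 1: "\<bar>x $ i\<bar> \<le> Max (range (\<lambda>i. \<bar>x $ i\<bar>))" by (rule Max_ge) auto
    have 2: "Max (range (\<lambda>i. \<bar>x $ i\<bar>)) = 0" using assms True by (simp add: pnorm_inf)
    show ?thesis using 1 2 by linarith
  qed
  then show ?thesis by (simp add: vec_eq_iff)
next
  case False
  then show ?thesis using pnorm_fin[OF assms(1)] qn_zero assms(2) by metis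
qed

lemma pnorm_mono:
  assumes "1 \<le> p" "\<And>i. \<bar>x $ i\<bar> \<le> \<bar>y $ i\<bar>" shows "pnorm p x \<le> pnorm p y"
proof (cases "p = \<infinity>")
  case True
  have "\<bar>x $ i\<bar> \<le> Max (range (\<lambda>i. \<bar>y $ i\<bar>))" for i
  proof -
    have "\<bar>y $ i\<bar> \<le> Max (range (\<lambda>i. \<bar>y $ i\<bar>))" by (rule Max_ge) auto
    then show ?thesis using assms(2)[of i] by linarith
  qed
  then show ?thesis using True by (simp add: pnorm_inf Max_le_iff)
next
  case False
  then show ?thesis using pnorm_fin[OF assms(1)] qn_mono assms(2) by metis
qed

lemma pQ_triangle:
  assumes "1 \<le> p" shows "pQnorm p Q (x + y) \<le> pQnorm p Q x + pQnorm p Q y"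
  using pnorm_triangle[OF assms] by (simp add: pQnorm_def matrix_vector_right_distrib)

lemma pQ_scale:
  assumes "1 \<le> p" shows "pQnorm p Q (c *\<^sub>R x) = \<bar>c\<bar> * pQnorm p Q x"
  using pnorm_scale[OF assms] by (simp add: pQnorm_def matrix_vector_mult_scaleR)

lemma pQ_nonneg: assumes "1 \<le> p" shows "0 \<le> pQnorm p Q x"
  using pnorm_nonneg[OF assms] by (simp add: pQnorm_def)

lemma pQ_zero0: assumes "1 \<le> p" shows "pQnorm p Q 0 = 0"
  using pQ_scale[OF assms, where c=0 and x=0 and Q=Q] by simp

lemma pQ_pos:
  assumes p: "1 \<le> p" and Q: "pos_diag Q" and x: "x \<noteq> 0"
  shows "0 < pQnorm p Q x"
proof -
  have "Q *v x \<noteq> 0"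
  proof
    assume z: "Q *v x = 0"
    have "(Q *v x) $ i = Q $ i $ i * x $ i" for i
    proof -
      have "(Q *v x) $ i = (\<Sum>j\<in>UNIV. Q $ i $ j * x $ j)" by (simp add: matrix_vector_mult_def)
      also have "\<dots> = (\<Sum>j\<in>UNIV. if j = i then Q $ i $ i * x $ i else 0)"
        using Q by (intro sum.cong) (auto simp: pos_diag_def)
      finally show ?thesis by simp
    qed
    then have "x $ i = 0" for i using z Q by (simp add: pos_diag_def) (metis less_irrefl)
    then show False using x by (simp add: vec_eq_iff)
  qed
  then have "pnorm p (Q *v x) \<noteq> 0" using pnorm_zero[OF p] by blast
  then show ?thesis using pnorm_nonneg[OF p, of "Q *v x"] by (simp add: pQnorm_def)
qed

lemma blk_triangle:
  assumes p: "1 \<le> p" shows "pQnorm_blk p Q (x + y) \<le> pQnorm_blk p Q x + pQnorm_blk p Q y"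
proof -
  have "pQnorm_blk p Q (x + y) \<le> pnorm p ((\<chi> k. pQnorm p Q (x $ k)) + (\<chi> k. pQnorm p Q (y $ k)))"
    unfolding pQnorm_blk_def
    by (rule pnorm_mono[OF p]) (simp add: pQ_nonneg[OF p] pQ_triangle[OF p] add_nonneg_nonneg)
  also have "\<dots> \<le> pQnorm_blk p Q x + pQnorm_blk p Q y"
    unfolding pQnorm_blk_def by (rule pnorm_triangle[OF p])
  finally show ?thesis .
qed

lemma blk_scale:
  assumes p: "1 \<le> p" shows "pQnorm_blk p Q (c *\<^sub>R x) = \<bar>c\<bar> * pQnorm_blk p Q x"
proof -
  have "(\<chi> k. pQnorm p Q ((c *\<^sub>R x) $ k)) = \<bar>c\<bar> *\<^sub>R (\<chi> k. pQnorm p Q (x $ k))"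
    by (simp add: vec_eq_iff pQ_scale[OF p])
  then show ?thesis unfolding pQnorm_blk_def by (simp add: pnorm_scale[OF p])
qed

lemma ratio_mono:
  fixes N :: "'v::real_vector \<Rightarrow> real"
  assumes tri: "\<And>x y. N (x + y) \<le> N x + N y"
    and hom: "\<And>c x. N (c *\<^sub>R x) = \<bar>c\<bar> * N x"
    and a: "0 < N a"
    and h: "0 < h1" "h1 \<le> h2"
  shows "(1/h1) * (N (a + h1 *\<^sub>R b) / N a - 1) \<le> (1/h2) * (N (a + h2 *\<^sub>R b) / N a - 1)"
proof -
  define t where "t = h1 / h2"
  have t: "0 < t" "t \<le> 1" using h by (auto simp: t_def)
  have eq: "a + h1 *\<^sub>R b = (1 - t) *\<^sub>R a + t *\<^sub>R (a + h2 *\<^sub>R b)"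
    using h by (simp add: t_def algebra_simps)
  have "N (a + h1 *\<^sub>R b) \<le> N ((1 - t) *\<^sub>R a) + N (t *\<^sub>R (a + h2 *\<^sub>R b))"
    unfolding eq by (rule tri)
  also have "\<dots> = (1 - t) * N a + t * N (a + h2 *\<^sub>R b)" using t by (simp add: hom)
  finally have le: "N (a + h1 *\<^sub>R b) - N a \<le> t * (N (a + h2 *\<^sub>R b) - N a)"
    by (simp add: algebra_simps)
  have "(1/h1) * (N (a + h1 *\<^sub>R b) / N a - 1) = (N (a + h1 *\<^sub>R b) - N a) / (h1 * N a)"
    using a h by (simp add: field_simps)
  also have "\<dots> \<le> t * (N (a + h2 *\<^sub>R b) - N a) / (h1 * N a)"
    using a h le by (intro divide_right_mono) auto
  also have "\<dots> = (1/h2) * (N (a + h2 *\<^sub>R b) / N a - 1)"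
    using a h by (simp add: t_def field_simps)
  finally show ?thesis .
qed

lemma ratio_bnd:
  fixes N :: "'v::real_vector \<Rightarrow> real"
  assumes tri: "\<And>x y. N (x + y) \<le> N x + N y"
    and hom: "\<And>c x. N (c *\<^sub>R x) = \<bar>c\<bar> * N x"
    and a: "0 < N a"
    and h: "0 < h"
  shows "- N b / N a \<le> (1/h) * (N (a + h *\<^sub>R b) / N a - 1)"
proof -
  have "N a \<le> N (a + h *\<^sub>R b) + N ((-h) *\<^sub>R b)"
    using tri[of "a + h *\<^sub>R b" "(-h) *\<^sub>R b"] by simp
  then have le: "N a - h * N b \<le> N (a + h *\<^sub>R b)" using h hom[of "-h" b] by simp
  have "(1/h) * (N (a + h *\<^sub>R b) / N a - 1) = (N (a + h *\<^sub>R b) - N a) / (h * N a)"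
    using a h by (simp add: field_simps)
  also have "\<dots> \<ge> (- h * N b) / (h * N a)"
    using a h le by (intro divide_right_mono) auto
  finally show ?thesis using h by simp
qed

lemma lim_real:
  fixes f :: "real \<Rightarrow> real"
  assumes mono: "\<And>a b. 0 < a \<Longrightarrow> a \<le> b \<Longrightarrow> f a \<le> f b"
    and bnd: "\<And>a. 0 < a \<Longrightarrow> K \<le> f a"
    and h: "0 < h"
  shows "Lim (at_right 0) f \<le> f h"
proof -
  have "(f \<longlongrightarrow> Inf (f ` ({0<..} \<inter> UNIV))) (at 0 within ({0<..} \<inter> UNIV))"
    by (rule Lim_right_bound[where K=K]) (auto intro: mono bnd)
  then have "(f \<longlongrightarrow> Inf (f ` {0<..})) (at_right 0)" by simp
  then have "Lim (at_right 0) f = Inf (f ` {0<..})"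
    by (intro tendsto_Lim) (simp add: trivial_limit_at_right_real)
  also have "\<dots> \<le> f h" using h bnd by (intro cInf_lower bdd_belowI2[where m=K]) auto
  finally show ?thesis .
qed

lemma lim_ereal:
  fixes f :: "real \<Rightarrow> ereal"
  assumes mono: "\<And>a b. 0 < a \<Longrightarrow> a \<le> b \<Longrightarrow> f a \<le> f b"
  shows "Lim (at_right 0) f = Inf (f ` {0<..})"
proof -
  have "(f \<longlongrightarrow> Inf (f ` ({0<..} \<inter> UNIV))) (at 0 within ({0<..} \<inter> UNIV))"
    by (rule Lim_right_bound[where K=bot]) (auto intro: mono)
  then have "(f \<longlongrightarrow> Inf (f ` {0<..})) (at_right 0)" by simp
  then show ?thesis
    by (intro tendsto_Lim) (simp add: trivial_limit_at_right_real)
qed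

lemma key:
  fixes V :: "(real^'n) set" and F :: "real^'n \<Rightarrow> real^'n"
    and Q :: "real^'n^'n" and p :: ereal and u v :: "(real^'n)^'N"
  assumes p: "1 \<le> p" and Q: "pos_diag Q"
    and u: "\<forall>k. u $ k \<in> V" and v: "\<forall>k. v $ k \<in> V" and uv: "u \<noteq> v" and h: "0 < h"
  shows "ereal ((1 / h) * (pQnorm_blk p Q (u - v + h *\<^sub>R (Ftilde F u - Ftilde F v))
                         / pQnorm_blk p Q (u - v) - 1))
    \<le> (SUP xy \<in> {(x, y). x \<in> V \<and> y \<in> V \<and> x \<noteq> y}.
        ereal ((1 / h) * (pQnorm p Q (fst xy - snd xy + h *\<^sub>R (F (fst xy) - F (snd xy)))
                          / pQnorm p Q (fst xy - snd xy) - 1)))" (is "?L \<le> ?S")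
proof -
  define r where "r k = pQnorm p Q (u $ k - v $ k + h *\<^sub>R (F (u $ k) - F (v $ k)))" for k
  define s where "s k = pQnorm p Q (u $ k - v $ k)" for k
  have NB1: "pQnorm_blk p Q (u - v + h *\<^sub>R (Ftilde F u - Ftilde F v)) = pnorm p (\<chi> k. r k)"
    by (simp add: pQnorm_blk_def r_def Ftilde_def)
  have NB2: "pQnorm_blk p Q (u - v) = pnorm p (\<chi> k. s k)"
    by (simp add: pQnorm_blk_def s_def)
  obtain k0 where k0: "u $ k0 \<noteq> v $ k0" using uv by (auto simp: vec_eq_iff)
  have low: "ereal ((1/h) * (r k / s k - 1)) \<le> ?S" if "u $ k \<noteq> v $ k" for k
    unfolding r_def s_def
    by (rule SUP_upper2[where i="(u $ k, v $ k)"]) (use that u v in auto)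
  have spos: "0 < s k" if "u $ k \<noteq> v $ k" for k
    unfolding s_def using that by (intro pQ_pos[OF p Q]) auto
  show ?thesis
  proof (cases "?S = \<infinity>")
    case True then show ?thesis by simp
  next
    case False
    have "?S \<noteq> -\<infinity>" using low[OF k0] by auto
    with False obtain c where c: "?S = ereal c" by (cases ?S) auto
    have rle: "r k \<le> (1 + h*c) * s k" for k
    proof (cases "u $ k = v $ k")
      case True
      then show ?thesis by (simp add: r_def s_def pQ_zero0[OF p])
    next
      case False
      have "(1/h) * (r k / s k - 1) \<le> c" using low[OF False] c by simp
      then have "r k / s k - 1 \<le> h * c" using h by (simp add: field_simps)
      then show ?thesis using spos[OF False] by (simp add: field_simps)
    qed
    have cpos: "0 \<le> 1 + h*c"
    proof -
      have "0 \<le> r k0" by (simp add: r_def pQ_nonneg[OF p])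
      then have "0 \<le> (1 + h*c) * s k0" using rle[of k0] by linarith
      then show ?thesis using spos[OF k0] by (simp add: zero_le_mult_iff)
    qed
    have "pnorm p (\<chi> k. r k) \<le> pnorm p ((1 + h*c) *\<^sub>R (\<chi> k. s k))"
      by (rule pnorm_mono[OF p]) (simp add: r_def pQ_nonneg[OF p] abs_mult cpos rle[unfolded r_def s_def] s_def)
    also have "\<dots> = (1 + h*c) * pnorm p (\<chi> k. s k)" using cpos by (simp add: pnorm_scale[OF p])
    finally have A: "pnorm p (\<chi> k. r k) \<le> (1 + h*c) * pnorm p (\<chi> k. s k)" .
    have B: "0 < pnorm p (\<chi> k. s k)"
    proof -
      have "(\<chi> k. s k) \<noteq> 0" using spos[OF k0] by (auto simp: vec_eq_iff intro!: exI[of _ k0])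
      then show ?thesis using pnorm_zero[OF p] pnorm_nonneg[OF p] by (metis less_eq_real_def)
    qed
    have "pnorm p (\<chi> k. r k) / pnorm p (\<chi> k. s k) - 1 \<le> h * c"
      using A B by (simp add: field_simps)
    then have "(1/h) * (pnorm p (\<chi> k. r k) / pnorm p (\<chi> k. s k) - 1) \<le> c"
      using h by (simp add: field_simps)
    then show ?thesis unfolding NB1 NB2 c by simp
  qed
qed

theorem lemma11:
  fixes V :: "(real^'n) set" and F :: "real^'n \<Rightarrow> real^'n"
    and Q :: "real^'n^'n" and p :: ereal
  assumes "convex V"
    and "\<exists>L. L-lipschitz_on V F"
    and "1 \<le> p"
    and "pos_diag Q"
  shows "logmu_plus_blk p Q V (Ftilde F :: (real^'n)^'N \<Rightarrow> (real^'n)^'N) \<le> logmu p Q V F"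
proof -
  note p = assms(3) and Q = assms(4)
  define S where "S h = (SUP xy \<in> {(x, y). x \<in> V \<and> y \<in> V \<and> x \<noteq> y}.
        ereal ((1 / h) * (pQnorm p Q (fst xy - snd xy + h *\<^sub>R (F (fst xy) - F (snd xy)))
                          / pQnorm p Q (fst xy - snd xy) - 1)))" for h :: real
  have Smono: "S a \<le> S b" if "0 < a" "a \<le> b" for a b
    unfolding S_def
  proof (rule SUP_mono)
    fix xy assume xy: "xy \<in> {(x, y). x \<in> V \<and> y \<in> V \<and> x \<noteq> y}"
    then have "0 < pQnorm p Q (fst xy - snd xy)" by (intro pQ_pos[OF p Q]) auto
    then have r: "(1 / a) * (pQnorm p Q (fst xy - snd xy + a *\<^sub>R (F (fst xy) - F (snd xy)))
                          / pQnorm p Q (fst xy - snd xy) - 1)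
      \<le> (1 / b) * (pQnorm p Q (fst xy - snd xy + b *\<^sub>R (F (fst xy) - F (snd xy)))
                          / pQnorm p Q (fst xy - snd xy) - 1)"
      by (rule ratio_mono[where N="pQnorm p Q", OF pQ_triangle[OF p] pQ_scale[OF p] _ that])
    show "\<exists>m\<in>{(x, y). x \<in> V \<and> y \<in> V \<and> x \<noteq> y}.
      ereal ((1 / a) * (pQnorm p Q (fst xy - snd xy + a *\<^sub>R (F (fst xy) - F (snd xy)))
                          / pQnorm p Q (fst xy - snd xy) - 1))
      \<le> ereal ((1 / b) * (pQnorm p Q (fst m - snd m + b *\<^sub>R (F (fst m) - F (snd m)))
                          / pQnorm p Q (fst m - snd m) - 1))"
      using xy r by (intro bexI[of _ xy]) simp_all
  qed
  have R: "logmu p Q V F = Inf (S ` {0<..})"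
    unfolding logmu_def S_def[symmetric] by (rule lim_ereal[OF Smono])
  show ?thesis
    unfolding logmu_plus_blk_def R
  proof (rule SUP_least, rule INF_greatest)
    fix uv :: "((real^'n)^'N) \<times> ((real^'n)^'N)" and h :: real
    assume uv: "uv \<in> {(u, v). (\<forall>k. u $ k \<in> V) \<and> (\<forall>k. v $ k \<in> V) \<and> u \<noteq> v}"
      and h: "h \<in> {0<..}"
    obtain u v where uvd: "uv = (u, v)" by (cases uv)
    have u: "\<forall>k. u $ k \<in> V" and v: "\<forall>k. v $ k \<in> V" and ne: "u \<noteq> v" using uv uvd by auto
    have apos: "0 < pQnorm_blk p Q (u - v)"
    proof -
      have "pQnorm_blk p Q (u - v) \<noteq> 0"
      proof
        assume z: "pQnorm_blk p Q (u - v) = 0"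
        obtain k0 where k0: "u $ k0 \<noteq> v $ k0" using ne by (auto simp: vec_eq_iff)
        have "(\<chi> k. pQnorm p Q ((u - v) $ k)) = 0" using z pnorm_zero[OF p] by (simp add: pQnorm_blk_def)
        then have "pQnorm p Q ((u - v) $ k0) = 0" by (metis vec_lambda_beta zero_index)
        moreover have "0 < pQnorm p Q ((u - v) $ k0)" using k0 by (intro pQ_pos[OF p Q]) simp
        ultimately show False by simp
      qed
      moreover have "0 \<le> pQnorm_blk p Q (u - v)" by (simp add: pQnorm_blk_def pnorm_nonneg[OF p])
      ultimately show ?thesis by simp
    qed
    let ?phi = "\<lambda>h. (1 / h) * (pQnorm_blk p Q (u - v + h *\<^sub>R (Ftilde F u - Ftilde F v))
                         / pQnorm_blk p Q (u - v) - 1)"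
    have "Lim (at_right 0) ?phi \<le> ?phi h"
      by (rule lim_real[where K="- pQnorm_blk p Q (Ftilde F u - Ftilde F v) / pQnorm_blk p Q (u - v)"])
         (fact ratio_mono[where N="pQnorm_blk p Q", OF blk_triangle[OF p] blk_scale[OF p] apos],
          fact ratio_bnd[where N="pQnorm_blk p Q", OF blk_triangle[OF p] blk_scale[OF p] apos],
          use h in simp)
    also have "ereal (?phi h) \<le> S h"
      unfolding S_def using h by (intro key[OF p Q u v ne]) simp
    finally show "ereal (Lim (at_right 0) (\<lambda>h. (1 / h) * (pQnorm_blk p Q (fst uv - snd uv + h *\<^sub>R (Ftilde F (fst uv) - Ftilde F (snd uv)))
                         / pQnorm_blk p Q (fst uv - snd uv) - 1))) \<le> S h"
      unfolding uvd by simp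
  qed
qed

end
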